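(* Let $M$ be a triangulated ideal 3-manifold with $\partial M=\varnothing$ and topological ideal triangulation $\mathcal D$. There is a branched covering $M^{\prime}$ of $M$ and a topological ideal triangulation $\mathcal{D}^{\prime}$ of $M^{\prime}$ such that $i_{\mathcal{D}^{\prime}}(e^{\prime})\geq6$ for each edge $e^{\prime}$ of $\mathcal{D}^{\prime}$.
   Context: A topological ideal tetrahedron is a space homeomorphic to a 3-simplex with its vertices removed. A triangulated ideal 3-manifold is a non-compact orientable 3-manifold obtained from a finite disjoint union of topological ideal tetrahedra by gluing faces of distinct tetrahedra pairwise via homeomorphisms, every face being glued; the tetrahedra with their faces and edges form its topological ideal triangulation. The index $i_{\mathcal D}(e)$ of an edge $e$ of a triangulation $\mathcal D$ is the integer $k\ge2$ such that every point of $e$ has a closed neighbourhood in the 2-skeleton of $\mathcal D$ homeomorphic to $k$ closed half-discs glued along their diameter. *)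

theory Defs
  imports Main "HOL-Combinatorics.Permutations"
begin

text \<open>Tetrahedra form a set T; each tetrahedron has vertices 0,1,2,3 and face i
  (for i < 4) is the face opposite vertex i.  gl (t,i) = (s,j) means that face i
  of t is glued to face j of s, via the vertex bijection sg (t,i) (which sends i to j).\<close>

definition ideal_gluing ::
  "'a set \<Rightarrow> ('a \<times> nat \<Rightarrow> 'a \<times> nat) \<Rightarrow> ('a \<times> nat \<Rightarrow> nat \<Rightarrow> nat) \<Rightarrow> bool" where
  "ideal_gluing T gl sg \<longleftrightarrow> finite T \<and> T \<noteq> {} \<and>
     (\<forall>t\<in>T. \<forall>i<4. fst (gl (t,i)) \<in> T \<and> snd (gl (t,i)) < 4
        \<and> fst (gl (t,i)) \<noteq> t
        \<and> gl (gl (t,i)) = (t,i)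
        \<and> bij_betw (sg (t,i)) {..<4} {..<4}
        \<and> sg (t,i) i = snd (gl (t,i))
        \<and> (\<forall>k<4. sg (gl (t,i)) (sg (t,i) k) = k))"

definition oriented_edge_rel ::
  "'a set \<Rightarrow> ('a \<times> nat \<Rightarrow> 'a \<times> nat) \<Rightarrow> ('a \<times> nat \<Rightarrow> nat \<Rightarrow> nat) \<Rightarrow> (('a \<times> nat \<times> nat) \<times> ('a \<times> nat \<times> nat)) set" where
  "oriented_edge_rel T gl sg =
     {((t,a,b), (fst (gl (t,i)), sg (t,i) a, sg (t,i) b)) | t a b i.
        t \<in> T \<and> a < 4 \<and> b < 4 \<and> a \<noteq> b \<and> i < 4 \<and> i \<noteq> a \<and> i \<noteq> b}"

text \<open>Manifold condition (for ideal gluings): no edge is identified with itself in reverse.\<close>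
definition valid_edges ::
  "'a set \<Rightarrow> ('a \<times> nat \<Rightarrow> 'a \<times> nat) \<Rightarrow> ('a \<times> nat \<Rightarrow> nat \<Rightarrow> nat) \<Rightarrow> bool" where
  "valid_edges T gl sg \<longleftrightarrow>
     (\<forall>t\<in>T. \<forall>a<4. \<forall>b<4. a \<noteq> b \<longrightarrow> ((t,a,b),(t,b,a)) \<notin> (oriented_edge_rel T gl sg)\<^sup>*)"

definition orientable_gluing ::
  "'a set \<Rightarrow> ('a \<times> nat \<Rightarrow> 'a \<times> nat) \<Rightarrow> ('a \<times> nat \<Rightarrow> nat \<Rightarrow> nat) \<Rightarrow> bool" where
  "orientable_gluing T gl sg \<longleftrightarrow>
     (\<exists>eps :: 'a \<Rightarrow> bool. \<forall>t\<in>T. \<forall>i<4.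
        (eps t = eps (fst (gl (t,i)))) \<longleftrightarrow>
          \<not> evenperm (\<lambda>k. if k < 4 then sg (t,i) k else k))"

text \<open>Triangulated ideal 3-manifold (orientable, boundary empty since every face is glued).\<close>
definition triangulated_ideal_3mfd ::
  "'a set \<Rightarrow> ('a \<times> nat \<Rightarrow> 'a \<times> nat) \<Rightarrow> ('a \<times> nat \<Rightarrow> nat \<Rightarrow> nat) \<Rightarrow> bool" where
  "triangulated_ideal_3mfd T gl sg \<longleftrightarrow>
     ideal_gluing T gl sg \<and> valid_edges T gl sg \<and> orientable_gluing T gl sg"

text \<open>Unoriented tetrahedron-edges (t,{a,b}) and their identification; an edge of the
  triangulation is an equivalence class.\<close>
definition tet_edges :: "'a set \<Rightarrow> ('a \<times> nat set) set" where
  "tet_edges T = {(t,E). t \<in> T \<and> E \<subseteq> {..<4} \<and> card E = 2}"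

definition edge_rel ::
  "'a set \<Rightarrow> ('a \<times> nat \<Rightarrow> 'a \<times> nat) \<Rightarrow> ('a \<times> nat \<Rightarrow> nat \<Rightarrow> nat) \<Rightarrow> (('a \<times> nat set) \<times> ('a \<times> nat set)) set" where
  "edge_rel T gl sg =
     {((t,E), (fst (gl (t,i)), sg (t,i) ` E)) | t E i.
        (t,E) \<in> tet_edges T \<and> i < 4 \<and> i \<notin> E}"

text \<open>Index of the edge containing the tetrahedron-edge x: the number of tetrahedron-edges
  (with multiplicity) identified to it, i.e. the number of half-discs around the edge.\<close>
definition edge_index ::
  "'a set \<Rightarrow> ('a \<times> nat \<Rightarrow> 'a \<times> nat) \<Rightarrow> ('a \<times> nat \<Rightarrow> nat \<Rightarrow> nat) \<Rightarrow> 'a \<times> nat set \<Rightarrow> nat" where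
  "edge_index T gl sg x = card ((edge_rel T gl sg)\<^sup>* `` {x})"

text \<open>Combinatorial branched covering (branched along edges): a surjective simplicial map,
  identity on vertex labels, sending tetrahedra to tetrahedra and commuting with the gluings.\<close>
definition branched_cover ::
  "'b set \<Rightarrow> ('b \<times> nat \<Rightarrow> 'b \<times> nat) \<Rightarrow> ('b \<times> nat \<Rightarrow> nat \<Rightarrow> nat) \<Rightarrow>
   'a set \<Rightarrow> ('a \<times> nat \<Rightarrow> 'a \<times> nat) \<Rightarrow> ('a \<times> nat \<Rightarrow> nat \<Rightarrow> nat) \<Rightarrow> ('b \<Rightarrow> 'a) \<Rightarrow> bool" where
  "branched_cover T' gl' sg' T gl sg p \<longleftrightarrow>
     p ` T' = T \<and>
     (\<forall>t\<in>T'. \<forall>i<4.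
        gl (p t, i) = (p (fst (gl' (t,i))), snd (gl' (t,i))) \<and>
        (\<forall>k<4. sg (p t, i) k = sg' (t,i) k))"

end

theory Submission
  imports Defs "HOL-Library.FuncSet"
begin

definition dl :: "('d \<Rightarrow> 'd) \<Rightarrow> 'd \<Rightarrow> 'd \<Rightarrow> int" where
  "dl sig d x = (if x = d then 1 else if x = sig d then 2 else 0)"


lemma igD:
  assumes "ideal_gluing T gl sg" "t \<in> T" "i < 4"
  shows "fst (gl (t,i)) \<in> T \<and> snd (gl (t,i)) < 4 \<and> fst (gl (t,i)) \<noteq> t \<and> gl (gl (t,i)) = (t,i)
     \<and> bij_betw (sg (t,i)) {..<4} {..<4} \<and> sg (t,i) i = snd (gl (t,i))
     \<and> (\<forall>k<4. sg (gl (t,i)) (sg (t,i) k) = k)"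
  using assms by (simp add: ideal_gluing_def)

definition Fib :: "'a set \<Rightarrow> ('a \<times> nat \<Rightarrow> int) set" where
  "Fib T = PiE (T \<times> {..<4}) (\<lambda>_. {0,1,2})"

definition act :: "'a set \<Rightarrow> ('a \<times> nat \<Rightarrow> 'a \<times> nat) \<Rightarrow> 'a \<times> nat \<Rightarrow> ('a \<times> nat \<Rightarrow> int) \<Rightarrow> ('a \<times> nat \<Rightarrow> int)" where
  "act T gl d s = restrict (\<lambda>x. (s x + dl gl d x) mod 3) (T \<times> {..<4})"

definition cT :: "'a set \<Rightarrow> ('a \<times> ('a \<times> nat \<Rightarrow> int)) set" where
  "cT T = T \<times> Fib T"

definition cgl :: "'a set \<Rightarrow> ('a \<times> nat \<Rightarrow> 'a \<times> nat) \<Rightarrow> ('a \<times> ('a \<times> nat \<Rightarrow> int)) \<times> nat \<Rightarrow> ('a \<times> ('a \<times> nat \<Rightarrow> int)) \<times> nat" where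
  "cgl T gl ts = ((fst (gl (fst (fst ts), snd ts)), act T gl (fst (fst ts), snd ts) (snd (fst ts))), snd (gl (fst (fst ts), snd ts)))"

definition csg :: "('a \<times> nat \<Rightarrow> nat \<Rightarrow> nat) \<Rightarrow> ('a \<times> 'c) \<times> nat \<Rightarrow> nat \<Rightarrow> nat" where
  "csg sg ts = sg (fst (fst ts), snd ts)"

lemma cgl_simp[simp]: "cgl T gl ((t,s),i) = ((fst (gl (t,i)), act T gl (t,i) s), snd (gl (t,i)))"
  by (simp add: cgl_def)

lemma csg_simp[simp]: "csg sg ((t,s),i) = sg (t,i)"
  by (simp add: csg_def)

lemma mod3_range: "(z::int) mod 3 \<in> {0,1,2}"
proof -
  have "0 \<le> z mod 3" "z mod 3 < 3" by auto
  then show ?thesis by auto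
qed

lemma act_in:
  assumes "s \<in> Fib T"
  shows "act T gl d s \<in> Fib T"
  using assms mod3_range unfolding Fib_def act_def by (auto simp: PiE_iff)

lemma zero_in_Fib: "(\<lambda>x\<in>T \<times> {..<4}. 0) \<in> Fib T"
  unfolding Fib_def by (auto simp: PiE_iff)

lemma finite_Fib: "finite T \<Longrightarrow> finite (Fib T)"
  unfolding Fib_def by (intro finite_PiE) auto

lemma act_inv:
  assumes ig: "ideal_gluing T gl sg" and t: "t \<in> T" and i: "i < 4" and s: "s \<in> Fib T"
  shows "act T gl (gl (t,i)) (act T gl (t,i) s) = s"
proof (rule ext)
  fix x
  have ne: "gl (t,i) \<noteq> (t,i)" and gg: "gl (gl (t,i)) = (t,i)"
    using igD[OF ig t i] by (auto simp: prod_eq_iff)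
  have gD: "gl (t,i) \<in> T \<times> {..<4}"
    using igD[OF ig t i] by (cases "gl (t,i)") auto
  show "act T gl (gl (t,i)) (act T gl (t,i) s) x = s x"
  proof (cases "x \<in> T \<times> {..<4}")
    case True
    have sx: "s x \<in> {0,1,2}" using s True unfolding Fib_def by (auto simp: PiE_iff)
    show ?thesis using True sx ne gg
      by (auto simp: act_def dl_def)
  next
    case False
    then show ?thesis using s unfolding act_def Fib_def by (cases x) (auto simp: PiE_iff extensional_def)
  qed
qed

lemma cover_ig:
  assumes ig: "ideal_gluing T gl sg"
  shows "ideal_gluing (cT T) (cgl T gl) (csg sg)"
proof -
  have fin: "finite T" and ne: "T \<noteq> {}" using ig by (auto simp: ideal_gluing_def)
  have "finite (cT T)" using fin finite_Fib unfolding cT_def by auto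
  moreover have "cT T \<noteq> {}" using ne zero_in_Fib unfolding cT_def by blast
  moreover have "\<forall>ts\<in>cT T. \<forall>i<4. fst (cgl T gl (ts,i)) \<in> cT T \<and> snd (cgl T gl (ts,i)) < 4
        \<and> fst (cgl T gl (ts,i)) \<noteq> ts
        \<and> cgl T gl (cgl T gl (ts,i)) = (ts,i)
        \<and> bij_betw (csg sg (ts,i)) {..<4} {..<4}
        \<and> csg sg (ts,i) i = snd (cgl T gl (ts,i))
        \<and> (\<forall>k<4. csg sg (cgl T gl (ts,i)) (csg sg (ts,i) k) = k)"
  proof (intro ballI allI impI)
    fix ts and i :: nat assume ts: "ts \<in> cT T" and i: "i < 4"
    obtain t s where tse: "ts = (t,s)" and t: "t \<in> T" and s: "s \<in> Fib T"
      using ts unfolding cT_def by auto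
    note D = igD[OF ig t i]
    have ai: "act T gl (gl (t,i)) (act T gl (t,i) s) = s" using act_inv[OF ig t i s] by simp
    have gq: "cgl T gl (cgl T gl ((t,s),i)) = ((t,s),i)"
      using D ai by (cases "gl (t,i)") (auto simp: cgl_def)
    show "fst (cgl T gl (ts,i)) \<in> cT T \<and> snd (cgl T gl (ts,i)) < 4
        \<and> fst (cgl T gl (ts,i)) \<noteq> ts
        \<and> cgl T gl (cgl T gl (ts,i)) = (ts,i)
        \<and> bij_betw (csg sg (ts,i)) {..<4} {..<4}
        \<and> csg sg (ts,i) i = snd (cgl T gl (ts,i))
        \<and> (\<forall>k<4. csg sg (cgl T gl (ts,i)) (csg sg (ts,i) k) = k)"
      using D gq act_in[OF s] unfolding tse cT_def by auto
  qed
  ultimately show ?thesis unfolding ideal_gluing_def by blast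
qed

lemma rtrancl_map_gen:
  assumes "(x,y) \<in> R\<^sup>*" and "\<And>a b. (a,b) \<in> R \<Longrightarrow> (f a, f b) \<in> S"
  shows "(f x, f y) \<in> S\<^sup>*"
  using assms(1)
proof (induction rule: rtrancl_induct)
  case base then show ?case by simp
next
  case (step y z) then show ?case using assms(2) by (meson rtrancl_into_rtrancl)
qed

lemma cover_valid:
  assumes ig: "ideal_gluing T gl sg" and ve: "valid_edges T gl sg"
  shows "valid_edges (cT T) (cgl T gl) (csg sg)"
proof -
  define f :: "('a \<times> ('a \<times> nat \<Rightarrow> int)) \<times> nat \<times> nat \<Rightarrow> 'a \<times> nat \<times> nat"
    where "f = (\<lambda>(ts,a,b). (fst ts, a, b))"
  have m: "(f u, f v) \<in> oriented_edge_rel T gl sg" if "(u,v) \<in> oriented_edge_rel (cT T) (cgl T gl) (csg sg)" for u v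
  proof -
    from that obtain ts a b i where "u = (ts,a,b)" "v = (fst (cgl T gl (ts,i)), csg sg (ts,i) a, csg sg (ts,i) b)"
      "ts \<in> cT T" "a < 4" "b < 4" "a \<noteq> b" "i < 4" "i \<noteq> a" "i \<noteq> b"
      unfolding oriented_edge_rel_def by blast
    moreover obtain t s where "ts = (t,s)" "t \<in> T" using \<open>ts \<in> cT T\<close> unfolding cT_def by auto
    ultimately show ?thesis unfolding oriented_edge_rel_def f_def by auto
  qed
  show ?thesis unfolding valid_edges_def
  proof (intro ballI allI impI notI)
    fix ts a b assume ts: "ts \<in> cT T" and ab: "a < 4" "b < 4" "a \<noteq> b"
      and r: "((ts,a,b),(ts,b,a)) \<in> (oriented_edge_rel (cT T) (cgl T gl) (csg sg))\<^sup>*"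
    have "(f (ts,a,b), f (ts,b,a)) \<in> (oriented_edge_rel T gl sg)\<^sup>*"
      by (rule rtrancl_map_gen[OF r m])
    moreover have "fst ts \<in> T" using ts unfolding cT_def by auto
    ultimately show False using ve ab unfolding valid_edges_def f_def by auto
  qed
qed

lemma cover_orient:
  assumes "orientable_gluing T gl sg"
  shows "orientable_gluing (cT T) (cgl T gl) (csg sg)"
proof -
  obtain eps :: "'a \<Rightarrow> bool" where e: "\<forall>t\<in>T. \<forall>i<4. (eps t = eps (fst (gl (t,i)))) \<longleftrightarrow>
          \<not> evenperm (\<lambda>k. if k < 4 then sg (t,i) k else k)"
    using assms unfolding orientable_gluing_def by blast
  show ?thesis unfolding orientable_gluing_def
  proof (rule exI[of _ "\<lambda>ts. eps (fst ts)"], intro ballI allI impI)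
    fix ts and i :: nat assume ts: "ts \<in> cT T" and i: "i < 4"
    obtain t s where tse: "ts = (t,s)" and t: "t \<in> T" using ts unfolding cT_def by auto
    have "(\<lambda>k. if k < 4 then csg sg (ts, i) k else k) = (\<lambda>k. if k < 4 then sg (t, i) k else k)"
      unfolding tse csg_simp by (rule refl)
    moreover have "fst (fst (cgl T gl (ts, i))) = fst (gl (t,i))" unfolding tse by simp
    ultimately show "(eps (fst ts) = eps (fst (fst (cgl T gl (ts, i))))) =
         (\<not> evenperm (\<lambda>k. if k < 4 then csg sg (ts, i) k else k))"
      using e t i tse by simp
  qed
qed

lemma cover_bc:
  assumes "ideal_gluing T gl sg"
  shows "branched_cover (cT T) (cgl T gl) (csg sg) T gl sg fst"
proof -
  have "fst ` cT T = T" using zero_in_Fib unfolding cT_def by force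
  then show ?thesis unfolding branched_cover_def by (auto simp: cT_def)
qed


definition nf :: "nat set \<Rightarrow> nat \<Rightarrow> nat" where
  "nf E b = (SOME g. g < 4 \<and> g \<notin> E \<and> g \<noteq> b)"

lemma compl_card:
  assumes "E \<subseteq> {..<4::nat}" "card E = 2"
  shows "card ({..<4} - E) = 2"
  using assms by (simp add: card_Diff_subset finite_subset)

lemma nf_prop:
  assumes "E \<subseteq> {..<4}" "card E = 2"
  shows "nf E b < 4 \<and> nf E b \<notin> E \<and> nf E b \<noteq> b"
proof -
  have c: "card ({..<4} - E) = 2" by (rule compl_card[OF assms])
  have "\<exists>g. g < 4 \<and> g \<notin> E \<and> g \<noteq> b"
  proof (rule ccontr)
    assume "\<not> ?thesis"
    then have "{..<4} - E \<subseteq> {b}" by auto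
    then have "card ({..<4} - E) \<le> card {b}" by (intro card_mono) auto
    then show False using c by simp
  qed
  then show ?thesis unfolding nf_def by (rule someI_ex)
qed

lemma ex_b0:
  assumes "E \<subseteq> {..<4::nat}" "card E = 2"
  shows "\<exists>b. b < 4 \<and> b \<notin> E"
proof -
  have "card ({..<4} - E) = 2" by (rule compl_card[OF assms])
  then have "{..<4} - E \<noteq> {}" by force
  then show ?thesis by auto
qed

definition wstep :: "('b \<times> nat \<Rightarrow> 'b \<times> nat) \<Rightarrow> ('b \<times> nat \<Rightarrow> nat \<Rightarrow> nat) \<Rightarrow> 'b \<times> nat set \<times> nat \<Rightarrow> 'b \<times> nat set \<times> nat" where
  "wstep gl sg st = (let t = fst st; E = fst (snd st); g = nf E (snd (snd st)) in
      (fst (gl (t,g)), sg (t,g) ` E, snd (gl (t,g))))"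

definition winv :: "'b set \<Rightarrow> 'b \<times> nat set \<times> nat \<Rightarrow> bool" where
  "winv T st \<longleftrightarrow> fst st \<in> T \<and> fst (snd st) \<subseteq> {..<4} \<and> card (fst (snd st)) = 2
     \<and> snd (snd st) < 4 \<and> snd (snd st) \<notin> fst (snd st)"

lemma wstep_inv:
  assumes ig: "ideal_gluing T gl sg" and w: "winv T st"
  shows "winv T (wstep gl sg st) \<and>
    ((fst st, fst (snd st)), (fst (wstep gl sg st), fst (snd (wstep gl sg st)))) \<in> edge_rel T gl sg"
proof -
  obtain t E b where st: "st = (t,E,b)" by (cases st) auto
  have t: "t \<in> T" and E: "E \<subseteq> {..<4}" "card E = 2" and b: "b < 4" "b \<notin> E"
    using w unfolding st winv_def by auto
  define g where "g = nf E b"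
  have g: "g < 4" "g \<notin> E" "g \<noteq> b" using nf_prop[OF E] unfolding g_def by auto
  note D = igD[OF ig t g(1)]
  have inj: "inj_on (sg (t,g)) {..<4}" and im: "sg (t,g) ` {..<4} = {..<4}"
    using D unfolding bij_betw_def by auto
  have ws: "wstep gl sg st = (fst (gl (t,g)), sg (t,g) ` E, snd (gl (t,g)))"
    unfolding wstep_def st g_def Let_def by simp
  have c2: "card (sg (t,g) ` E) = 2" using E inj by (metis card_image inj_on_subset)
  have sub: "sg (t,g) ` E \<subseteq> {..<4}" using E im by auto
  have nin: "snd (gl (t,g)) \<notin> sg (t,g) ` E"
  proof
    assume "snd (gl (t,g)) \<in> sg (t,g) ` E"
    then obtain e where e: "e \<in> E" "sg (t,g) e = sg (t,g) g" using D by auto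
    then have "e = g" using inj E g(1) by (auto dest: inj_onD)
    then show False using e g by auto
  qed
  have "winv T (wstep gl sg st)" unfolding ws winv_def using D c2 sub nin by auto
  moreover have "((t,E), (fst (gl (t,g)), sg (t,g) ` E)) \<in> edge_rel T gl sg"
    unfolding edge_rel_def tet_edges_def using t E g by blast
  ultimately show ?thesis using ws unfolding st by simp
qed

lemma edge_rel_closed:
  assumes ig: "ideal_gluing T gl sg" and r: "(x,y) \<in> (edge_rel T gl sg)\<^sup>*" and x: "x \<in> tet_edges T"
  shows "y \<in> tet_edges T"
  using r x
proof (induction rule: rtrancl_induct)
  case base then show ?case by simp
next
  case (step y z)
  from step.hyps(2) obtain t E i where yz: "y = (t,E)" "z = (fst (gl (t,i)), sg (t,i) ` E)"
    "(t,E) \<in> tet_edges T" "i < 4" "i \<notin> E"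
    unfolding edge_rel_def by blast
  have t: "t \<in> T" and E: "E \<subseteq> {..<4}" "card E = 2" using yz(3) unfolding tet_edges_def by auto
  note D = igD[OF ig t yz(4)]
  have inj: "inj_on (sg (t,i)) {..<4}" and im: "sg (t,i) ` {..<4} = {..<4}"
    using D unfolding bij_betw_def by auto
  have c2: "card (sg (t,i) ` E) = 2" using E inj by (metis card_image inj_on_subset)
  have sub: "sg (t,i) ` E \<subseteq> {..<4}" using E im by auto
  show ?case unfolding yz(2) tet_edges_def using D c2 sub by auto
qed

lemma finite_tet_edges: "finite T \<Longrightarrow> finite (tet_edges T)"
proof -
  assume "finite T"
  moreover have "tet_edges T \<subseteq> T \<times> Pow {..<4}" unfolding tet_edges_def by auto
  ultimately show ?thesis by (meson finite_Pow_iff finite_SigmaI finite_lessThan finite_subset)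
qed

lemma fib_sum:
  assumes "finite X" "\<forall>j\<in>X. d j \<in> T \<times> {..<4} \<and> gl (d j) \<in> T \<times> {..<4}" "x \<notin> T \<times> {..<4}"
  shows "(\<Sum>j\<in>X. dl gl (d j) x) = 0"
  using assms by (intro sum.neutral) (auto simp: dl_def)
lemma sum_exp:
  "(\<Sum>i\<in>{0..<1::nat}. f i) = f 0"
  "(\<Sum>i\<in>{0..<2::nat}. f i) = f 0 + f 1"
  "(\<Sum>i\<in>{1..<2::nat}. f i) = f 1"
  "(\<Sum>i\<in>{0..<3::nat}. f i) = f 0 + f 1 + f 2"
  "(\<Sum>i\<in>{1..<3::nat}. f i) = f 1 + f 2"
  "(\<Sum>i\<in>{2..<3::nat}. f i) = f 2"
  "(\<Sum>i\<in>{0..<4::nat}. f i) = f 0 + f 1 + f 2 + f 3"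
  "(\<Sum>i\<in>{1..<4::nat}. f i) = f 1 + f 2 + f 3"
  "(\<Sum>i\<in>{2..<4::nat}. f i) = f 2 + f 3"
  "(\<Sum>i\<in>{3..<4::nat}. f i) = f 3"
  "(\<Sum>i\<in>{0..<5::nat}. f i) = f 0 + f 1 + f 2 + f 3 + f 4"
  "(\<Sum>i\<in>{1..<5::nat}. f i) = f 1 + f 2 + f 3 + f 4"
  "(\<Sum>i\<in>{2..<5::nat}. f i) = f 2 + f 3 + f 4"
  "(\<Sum>i\<in>{3..<5::nat}. f i) = f 3 + f 4"
  "(\<Sum>i\<in>{4..<5::nat}. f i) = f 4"
  by (simp_all add: sum.atLeastLessThan_Suc eval_nat_numeral)

lemma comb:
  fixes c :: "nat \<Rightarrow> 'd" and sig :: "'d \<Rightarrow> 'd"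
  assumes inv: "\<And>i. i < 5 \<Longrightarrow> sig (c i) \<noteq> c i \<and> sig (sig (c i)) = c i"
  and c1: "\<And>i. i < 4 \<Longrightarrow> c (Suc i) \<noteq> c i \<and> c (Suc i) \<noteq> sig (c i)"
  and c2: "\<And>i. i < 3 \<Longrightarrow> c (Suc (Suc i)) \<noteq> sig (c i)"
  and ab: "a < b" "b \<le> 5"
  shows "\<exists>x. (\<Sum>i\<in>{a..<b}. dl sig (c i) x) mod 3 \<noteq> 0"
proof -
  have i0: "sig (c 0) \<noteq> c 0" "sig (sig (c 0)) = c 0" using inv[of 0] by auto
  have i1: "sig (c 1) \<noteq> c 1" "sig (sig (c 1)) = c 1" using inv[of 1] by auto
  have i2: "sig (c 2) \<noteq> c 2" "sig (sig (c 2)) = c 2" using inv[of 2] by auto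
  have i3: "sig (c 3) \<noteq> c 3" "sig (sig (c 3)) = c 3" using inv[of 3] by auto
  have i4: "sig (c 4) \<noteq> c 4" "sig (sig (c 4)) = c 4" using inv[of 4] by auto
  have a0: "c 1 \<noteq> c 0" "c 1 \<noteq> sig (c 0)" using c1[of 0] by auto
  have a1: "c 2 \<noteq> c 1" "c 2 \<noteq> sig (c 1)" using c1[of 1] by (auto simp: numeral_2_eq_2)
  have a2: "c 3 \<noteq> c 2" "c 3 \<noteq> sig (c 2)" using c1[of 2] by (auto simp: numeral_3_eq_3 numeral_2_eq_2)
  have a3: "c 4 \<noteq> c 3" "c 4 \<noteq> sig (c 3)" using c1[of 3] by (auto simp: numeral_3_eq_3 eval_nat_numeral)
  have b0: "c 2 \<noteq> sig (c 0)" using c2[of 0] by (auto simp: numeral_2_eq_2)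
  have b1: "c 3 \<noteq> sig (c 1)" using c2[of 1] by (auto simp: eval_nat_numeral)
  have b2: "c 4 \<noteq> sig (c 2)" using c2[of 2] by (auto simp: eval_nat_numeral)
  note F = i0 i1 i2 i3 i4 a0 a1 a2 a3 b0 b1 b2
  have s1: "sig (c 1) \<noteq> c 2" "sig (c 0) \<noteq> c 1" "sig (c 2) \<noteq> c 3" "sig (c 3) \<noteq> c 4"
     "sig (c 0) \<noteq> c 2" "sig (c 1) \<noteq> c 3" "sig (c 2) \<noteq> c 4"
    using F by metis+
  have s2: "c 0 \<noteq> sig (c 1)" "c 1 \<noteq> sig (c 2)" "c 2 \<noteq> sig (c 3)" "c 3 \<noteq> sig (c 4)"
     "c 0 \<noteq> sig (c 2)" "c 1 \<noteq> sig (c 3)" "c 2 \<noteq> sig (c 4)"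
    using F by metis+
  note G = F s1 s2
  have cases: "(a,b) \<in> {(0,1),(1,2),(2,3),(3,4),(4,5),(0,2),(1,3),(2,4),(3,5),(0,3),(1,4),(2,5),(0,4),(1,5),(0,5)}"
  proof -
    have "b = 1 \<or> b = 2 \<or> b = 3 \<or> b = 4 \<or> b = 5" using ab by linarith
    then show ?thesis using ab(1) by (elim disjE; simp add: less_Suc_eq eval_nat_numeral; elim disjE; simp)
  qed
  have e: "\<And>P. P (0::nat) (1::nat) \<Longrightarrow> P 1 2 \<Longrightarrow> P 2 3 \<Longrightarrow> P 3 4 \<Longrightarrow> P 4 5 \<Longrightarrow> P 0 2 \<Longrightarrow> P 1 3 \<Longrightarrow> P 2 4 \<Longrightarrow> P 3 5 \<Longrightarrow> P 0 3 \<Longrightarrow> P 1 4 \<Longrightarrow> P 2 5 \<Longrightarrow> P 0 4 \<Longrightarrow> P 1 5 \<Longrightarrow> P 0 5 \<Longrightarrow> P a b"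
    using cases by blast
  note S = dl_def G G[unfolded One_nat_def]
  show ?thesis
  proof (rule e[where P="\<lambda>a b. \<exists>x. (\<Sum>i\<in>{a..<b}. dl sig (c i) x) mod 3 \<noteq> 0"])
    show "\<exists>x. (\<Sum>i\<in>{0..<1}. dl sig (c i) x) mod 3 \<noteq> 0" by (rule exI[of _ "c 0"]) (simp only: sum_exp, auto simp add: S)
next
    show "\<exists>x. (\<Sum>i\<in>{1..<2}. dl sig (c i) x) mod 3 \<noteq> 0" by (rule exI[of _ "c 1"]) (simp only: sum_exp, auto simp add: S)
next
    show "\<exists>x. (\<Sum>i\<in>{2..<3}. dl sig (c i) x) mod 3 \<noteq> 0" by (rule exI[of _ "c 2"]) (simp only: sum_exp, auto simp add: S)
next
    show "\<exists>x. (\<Sum>i\<in>{3..<4}. dl sig (c i) x) mod 3 \<noteq> 0" by (rule exI[of _ "c 3"]) (simp only: sum_exp, auto simp add: S)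
next
    show "\<exists>x. (\<Sum>i\<in>{4..<5}. dl sig (c i) x) mod 3 \<noteq> 0" by (rule exI[of _ "c 4"]) (simp only: sum_exp, auto simp add: S)
next
    show "\<exists>x. (\<Sum>i\<in>{0..<2}. dl sig (c i) x) mod 3 \<noteq> 0" by (rule exI[of _ "c 0"]) (simp only: sum_exp, auto simp add: S)
next
    show "\<exists>x. (\<Sum>i\<in>{1..<3}. dl sig (c i) x) mod 3 \<noteq> 0" by (rule exI[of _ "c 1"]) (simp only: sum_exp, auto simp add: S)
next
    show "\<exists>x. (\<Sum>i\<in>{2..<4}. dl sig (c i) x) mod 3 \<noteq> 0" by (rule exI[of _ "c 2"]) (simp only: sum_exp, auto simp add: S)
next
    show "\<exists>x. (\<Sum>i\<in>{3..<5}. dl sig (c i) x) mod 3 \<noteq> 0" by (rule exI[of _ "c 3"]) (simp only: sum_exp, auto simp add: S)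
next
    show "\<exists>x. (\<Sum>i\<in>{0..<3}. dl sig (c i) x) mod 3 \<noteq> 0" by (rule exI[of _ "c 1"]) (simp only: sum_exp, auto simp add: S)
next
    show "\<exists>x. (\<Sum>i\<in>{1..<4}. dl sig (c i) x) mod 3 \<noteq> 0" by (rule exI[of _ "c 2"]) (simp only: sum_exp, auto simp add: S)
next
    show "\<exists>x. (\<Sum>i\<in>{2..<5}. dl sig (c i) x) mod 3 \<noteq> 0" by (rule exI[of _ "c 3"]) (simp only: sum_exp, auto simp add: S)
next
    show "\<exists>x. (\<Sum>i\<in>{0..<4}. dl sig (c i) x) mod 3 \<noteq> 0" by (rule exI[of _ "c 1"]) (simp only: sum_exp, auto simp add: S)
next
    show "\<exists>x. (\<Sum>i\<in>{1..<5}. dl sig (c i) x) mod 3 \<noteq> 0" by (rule exI[of _ "c 2"]) (simp only: sum_exp, auto simp add: S)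
next
    show "\<exists>x. (\<Sum>i\<in>{0..<5}. dl sig (c i) x) mod 3 \<noteq> 0"
    proof (cases "c 4 = sig (c 1)")
      case True
      then show ?thesis using G True by (intro exI[of _ "c 2"]) (simp only: sum_exp dl_def, auto)
    next
      case False
      then show ?thesis using G False by (intro exI[of _ "c 1"]) (simp only: sum_exp dl_def, auto)
    qed
  qed
qed

lemma index_ge6:
  assumes ig: "ideal_gluing T gl sg" and x: "x \<in> tet_edges (cT T)"
  shows "6 \<le> edge_index (cT T) (cgl T gl) (csg sg) x"
proof -
  let ?T = "cT T" let ?G = "cgl T gl" let ?S = "csg sg"
  have ig': "ideal_gluing ?T ?G ?S" by (rule cover_ig[OF ig])
  obtain ts E where xe: "x = (ts,E)" and ts: "ts \<in> ?T" and E: "E \<subseteq> {..<4}" "card E = 2"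
    using x unfolding tet_edges_def by auto
  obtain t s where tse: "ts = (t,s)" and t: "t \<in> T" and s: "s \<in> Fib T"
    using ts unfolding cT_def by auto
  obtain b0 where b0: "b0 < 4" "b0 \<notin> E" using ex_b0[OF E] by auto
  define U where "U j = (wstep ?G ?S ^^ j) (ts,E,b0)" for j
  have U0: "U 0 = (ts,E,b0)" and US: "U (Suc j) = wstep ?G ?S (U j)" for j
    by (simp_all add: U_def)
  have Uinv: "winv ?T (U j)" for j
  proof (induction j)
    case 0 show ?case using ts E b0 by (simp add: U0 winv_def)
  next
    case (Suc j) then show ?case using wstep_inv[OF ig'] by (simp add: US)
  qed
  define node where "node j = (fst (U j), fst (snd (U j)))" for j
  have reach: "(x, node j) \<in> (edge_rel ?T ?G ?S)\<^sup>*" for j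
  proof (induction j)
    case 0 show ?case by (simp add: node_def U0 xe)
  next
    case (Suc j)
    have "(node j, node (Suc j)) \<in> edge_rel ?T ?G ?S"
      using wstep_inv[OF ig' Uinv[of j]] by (simp add: node_def US)
    then show ?case using Suc by (meson rtrancl_into_rtrancl)
  qed
  define dart where "dart j = (fst (fst (U j)), nf (fst (snd (U j))) (snd (snd (U j))))" for j
  define F where "F j = snd (fst (U j))" for j
  have Ustep: "fst (U (Suc j)) = (fst (gl (dart j)), act T gl (dart j) (F j))
      \<and> snd (snd (U (Suc j))) = snd (gl (dart j))" for j
    by (simp add: US wstep_def Let_def dart_def F_def cgl_def)
  have dartD: "fst (dart j) \<in> T \<and> snd (dart j) < 4 \<and> snd (dart j) \<noteq> snd (snd (U j))" for j
  proof -
    have w: "winv ?T (U j)" by (rule Uinv)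
    then have "fst (fst (U j)) \<in> T" unfolding winv_def cT_def by auto
    moreover have "nf (fst (snd (U j))) (snd (snd (U j))) < 4 \<and>
       nf (fst (snd (U j))) (snd (snd (U j))) \<noteq> snd (snd (U j))"
      using nf_prop[of "fst (snd (U j))"] w unfolding winv_def by auto
    ultimately show ?thesis unfolding dart_def by simp
  qed
  have dartG: "dart j = (fst (dart j), snd (dart j))" for j by simp
  have glD: "fst (gl (dart j)) \<in> T \<and> snd (gl (dart j)) < 4 \<and> fst (gl (dart j)) \<noteq> fst (dart j)
      \<and> gl (gl (dart j)) = dart j" for j
    using igD[OF ig, of "fst (dart j)" "snd (dart j)"] dartD[of j] by simp
  have fstS: "fst (dart (Suc j)) = fst (gl (dart j))" for j
    using Ustep[of j] by (simp add: dart_def)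
  have sndS: "snd (dart (Suc j)) \<noteq> snd (gl (dart j))" for j
    using Ustep[of j] dartD[of "Suc j"] by simp
  have F0: "F 0 = s" by (simp add: F_def U0 tse)
  have FS: "F (Suc j) = act T gl (dart j) (F j)" for j using Ustep[of j] by (simp add: F_def)
  have Fform: "F j y = (s y + (\<Sum>i<j. dl gl (dart i) y)) mod 3" if y: "y \<in> T \<times> {..<4}" for j y
  proof (induction j)
    case 0
    have "s y \<in> {0,1,2}" using s y unfolding Fib_def by (auto simp: PiE_iff)
    then show ?case by (auto simp: F0)
  next
    case (Suc j)
    have "F (Suc j) y = (F j y + dl gl (dart j) y) mod 3" using y by (simp add: FS act_def)
    also have "\<dots> = (s y + (\<Sum>i<j. dl gl (dart i) y) + dl gl (dart j) y) mod 3"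
      unfolding Suc by (simp add: mod_add_left_eq)
    finally show ?case by (simp add: add.assoc)
  qed
  have cinv: "\<And>i. i < 5 \<Longrightarrow> gl (dart i) \<noteq> dart i \<and> gl (gl (dart i)) = dart i"
    using glD by (metis prod.collapse)
  have cc1: "\<And>i. i < 4 \<Longrightarrow> dart (Suc i) \<noteq> dart i \<and> dart (Suc i) \<noteq> gl (dart i)"
    using glD fstS sndS by metis
  have cc2: "\<And>i. i < 3 \<Longrightarrow> dart (Suc (Suc i)) \<noteq> gl (dart i)"
    using glD fstS by metis
  have dist: "node a \<noteq> node b" if ab: "a < b" "b \<le> 5" for a b
  proof
    assume eq: "node a = node b"
    then have Fe: "F a = F b" unfolding node_def F_def by (metis fst_conv)
    obtain y where y: "(\<Sum>i\<in>{a..<b}. dl gl (dart i) y) mod 3 \<noteq> 0"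
      using comb[where c=dart and sig=gl, OF cinv cc1 cc2 ab] by blast
    have yD: "y \<in> T \<times> {..<4}"
    proof (rule ccontr)
      assume "y \<notin> T \<times> {..<4}"
      then have "(\<Sum>i\<in>{a..<b}. dl gl (dart i) y) = 0"
        using dartD glD by (intro fib_sum) (auto simp: mem_Times_iff)
      then show False using y by simp
    qed
    have split: "(\<Sum>i<b. dl gl (dart i) y) = (\<Sum>i<a. dl gl (dart i) y) + (\<Sum>i\<in>{a..<b}. dl gl (dart i) y)"
      using ab by (simp add: lessThan_atLeast0 sum.atLeastLessThan_concat)
    have "(s y + (\<Sum>i<a. dl gl (dart i) y)) mod 3 = (s y + (\<Sum>i<b. dl gl (dart i) y)) mod 3"
      using Fe Fform[OF yD] by metis
    then have h: "(s y + (\<Sum>i<a. dl gl (dart i) y)) mod 3 = (s y + (\<Sum>i<a. dl gl (dart i) y) + (\<Sum>i\<in>{a..<b}. dl gl (dart i) y)) mod 3"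
      unfolding split by (simp add: add.assoc)
    have gen: "\<forall>P C::int. P mod 3 = (P + C) mod 3 \<longrightarrow> C mod 3 = 0" by presburger
    have "(\<Sum>i\<in>{a..<b}. dl gl (dart i) y) mod 3 = 0" using gen h by blast
    then show False using y by simp
  qed
  have inj: "inj_on node {..<6}"
  proof (rule inj_onI)
    fix a b assume a: "a \<in> {..<(6::nat)}" and b: "b \<in> {..<(6::nat)}" and e: "node a = node b"
    show "a = b"
    proof (rule ccontr)
      assume "a \<noteq> b"
      then have "a < b \<or> b < a" by arith
      moreover have "a \<le> 5" "b \<le> 5" using a b by auto
      ultimately show False using dist e by metis
    qed
  qed
  have sub: "node ` {..<6} \<subseteq> (edge_rel ?T ?G ?S)\<^sup>* `` {x}" using reach by auto
  have fin: "finite ((edge_rel ?T ?G ?S)\<^sup>* `` {x})"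
  proof (rule finite_subset)
    show "(edge_rel ?T ?G ?S)\<^sup>* `` {x} \<subseteq> tet_edges ?T"
      using edge_rel_closed[OF ig' _ x] by auto
    show "finite (tet_edges ?T)" using ig' by (intro finite_tet_edges) (simp add: ideal_gluing_def)
  qed
  have "card (node ` {..<6}) = 6" using inj by (simp add: card_image)
  then show ?thesis unfolding edge_index_def using card_mono[OF fin sub] by simp
qed

lemma transfer_nat:
  fixes T2 :: "'b set" and gl2 :: "'b \<times> nat \<Rightarrow> 'b \<times> nat" and sg2 :: "'b \<times> nat \<Rightarrow> nat \<Rightarrow> nat"
    and T :: "'a set" and gl :: "'a \<times> nat \<Rightarrow> 'a \<times> nat" and sg :: "'a \<times> nat \<Rightarrow> nat \<Rightarrow> nat"
  assumes ig2: "ideal_gluing T2 gl2 sg2" and ve2: "valid_edges T2 gl2 sg2" and or2: "orientable_gluing T2 gl2 sg2"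
    and bc2: "branched_cover T2 gl2 sg2 T gl sg p"
    and ix2: "\<forall>x\<in>tet_edges T2. 6 \<le> edge_index T2 gl2 sg2 x"
  shows "\<exists>(T' :: nat set) gl' sg' p'.
           triangulated_ideal_3mfd T' gl' sg' \<and>
           branched_cover T' gl' sg' T gl sg p' \<and>
           (\<forall>x\<in>tet_edges T'. edge_index T' gl' sg' x \<ge> 6)"
proof -
  have fin2: "finite T2" and ne2: "T2 \<noteq> {}" using ig2 by (auto simp: ideal_gluing_def)
  obtain f :: "'b \<Rightarrow> nat" and n where fim: "f ` T2 = {i. i < n}" and inj: "inj_on f T2"
    using finite_imp_inj_to_nat_seg[OF fin2] by blast
  define g where "g = inv_into T2 f"
  have gf: "g (f b) = b" if "b \<in> T2" for b using inj that by (simp add: g_def)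
  have gT: "g m \<in> T2" if "m \<in> f ` T2" for m using that by (simp add: g_def inv_into_into)
  have fg: "f (g m) = m" if "m \<in> f ` T2" for m using that by (simp add: g_def f_inv_into_f)
  define T' where "T' = f ` T2"
  define gl' where "gl' = (\<lambda>(m::nat,i::nat). (f (fst (gl2 (g m, i))), snd (gl2 (g m, i))))"
  define sg' where "sg' = (\<lambda>(m::nat,i::nat). sg2 (g m, i))"
  define p' where "p' = (\<lambda>m. p (g m))"
  have gl'_s: "gl' (m,i) = (f (fst (gl2 (g m, i))), snd (gl2 (g m, i)))" for m i by (simp add: gl'_def)
  have sg'_s: "sg' (m,i) = sg2 (g m, i)" for m i by (simp add: sg'_def)
  have gl'_f: "gl' (f b, i) = (f (fst (gl2 (b, i))), snd (gl2 (b, i)))" if "b \<in> T2" for b i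
    using that by (simp add: gl'_s gf)
  have sg'_f: "sg' (f b, i) = sg2 (b, i)" if "b \<in> T2" for b i
    using that by (simp add: sg'_s gf)
  have ig': "ideal_gluing T' gl' sg'"
    unfolding ideal_gluing_def
  proof (intro conjI ballI allI impI)
    show "finite T'" using fin2 by (simp add: T'_def)
    show "T' \<noteq> {}" using ne2 by (simp add: T'_def)
  next
    fix m and i :: nat assume m: "m \<in> T'" and i: "i < 4"
    obtain b where b: "b \<in> T2" "m = f b" using m unfolding T'_def by auto
    note D = igD[OF ig2 b(1) i]
    obtain b' j where e: "gl2 (b,i) = (b',j)" by force
    have b': "b' \<in> T2" "j < 4" "b' \<noteq> b" "gl2 (b',j) = (b,i)" using D e by auto
    show "fst (gl' (m, i)) \<in> T'" using b b' e by (simp add: gl'_f T'_def)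
    show "snd (gl' (m, i)) < 4" using b b' e by (simp add: gl'_f)
    show "fst (gl' (m, i)) \<noteq> m" using b b' e inj by (auto simp: gl'_f dest: inj_onD)
    show "gl' (gl' (m, i)) = (m, i)" using b b' e by (simp add: gl'_f)
    show "bij_betw (sg' (m, i)) {..<4} {..<4}" using b D by (simp add: sg'_f)
    show "sg' (m, i) i = snd (gl' (m, i))" using b D by (simp add: sg'_f gl'_f)
    show "sg' (gl' (m, i)) (sg' (m, i) k) = k" if k: "k < 4" for k
      using b b' e D k by (simp add: sg'_f gl'_f)
  qed
  have ve': "valid_edges T' gl' sg'"
  proof -
    define K :: "nat \<times> nat \<times> nat \<Rightarrow> 'b \<times> nat \<times> nat" where "K = (\<lambda>(m,a,b). (g m, a, b))"
    have mK: "(K u, K v) \<in> oriented_edge_rel T2 gl2 sg2" if "(u,v) \<in> oriented_edge_rel T' gl' sg'" for u v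
    proof -
      from that obtain m a b i where uv: "u = (m,a,b)" "v = (fst (gl' (m,i)), sg' (m,i) a, sg' (m,i) b)"
        "m \<in> T'" "a < 4" "b < 4" "a \<noteq> b" "i < 4" "i \<noteq> a" "i \<noteq> b"
        unfolding oriented_edge_rel_def by blast
      obtain c where c: "c \<in> T2" "m = f c" using uv(3) unfolding T'_def by auto
      have "fst (gl2 (c,i)) \<in> T2" using igD[OF ig2 c(1) uv(7)] by simp
      then have "K v = (fst (gl2 (c,i)), sg2 (c,i) a, sg2 (c,i) b)"
        using c by (simp add: uv K_def gl'_f sg'_f gf)
      moreover have "K u = (c,a,b)" using c by (simp add: uv K_def gf)
      ultimately show ?thesis unfolding oriented_edge_rel_def using c uv by blast
    qed
    show ?thesis unfolding valid_edges_def
    proof (intro ballI allI impI notI)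
      fix m a b assume m: "m \<in> T'" and ab: "a < 4" "b < 4" "a \<noteq> b"
        and r: "((m,a,b),(m,b,a)) \<in> (oriented_edge_rel T' gl' sg')\<^sup>*"
      have "(K (m,a,b), K (m,b,a)) \<in> (oriented_edge_rel T2 gl2 sg2)\<^sup>*"
        by (rule rtrancl_map_gen[OF r mK])
      moreover have "g m \<in> T2" using m gT unfolding T'_def by auto
      ultimately show False using ve2 ab unfolding valid_edges_def K_def by auto
    qed
  qed
  have or': "orientable_gluing T' gl' sg'"
  proof -
    obtain eps :: "'b \<Rightarrow> bool" where e: "\<forall>t\<in>T2. \<forall>i<4. (eps t = eps (fst (gl2 (t,i)))) \<longleftrightarrow>
          \<not> evenperm (\<lambda>k. if k < 4 then sg2 (t,i) k else k)"
      using or2 unfolding orientable_gluing_def by blast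
    show ?thesis unfolding orientable_gluing_def
    proof (rule exI[of _ "\<lambda>m. eps (g m)"], intro ballI allI impI)
      fix m and i :: nat assume m: "m \<in> T'" and i: "i < 4"
      obtain b where b: "b \<in> T2" "m = f b" using m unfolding T'_def by auto
      have "fst (gl2 (b,i)) \<in> T2" using igD[OF ig2 b(1) i] by simp
      then have "g (fst (gl' (m,i))) = fst (gl2 (b,i))" using b by (simp add: gl'_f gf)
      moreover have "(\<lambda>k. if k < 4 then sg' (m, i) k else k) = (\<lambda>k. if k < 4 then sg2 (b, i) k else k)"
        unfolding b(2) sg'_f[OF b(1)] by (rule refl)
      ultimately show "(eps (g m) = eps (g (fst (gl' (m, i))))) =
         (\<not> evenperm (\<lambda>k. if k < 4 then sg' (m, i) k else k))"
        using e b i by (simp add: gf)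
    qed
  qed
  have bc': "branched_cover T' gl' sg' T gl sg p'"
    unfolding branched_cover_def
  proof (intro conjI ballI allI impI)
    have "p' ` T' = p ` T2" unfolding p'_def T'_def by (force simp: gf image_image)
    then show "p' ` T' = T" using bc2 unfolding branched_cover_def by simp
  next
    fix m and i :: nat assume m: "m \<in> T'" and i: "i < 4"
    obtain b where b: "b \<in> T2" "m = f b" using m unfolding T'_def by auto
    have B: "gl (p b, i) = (p (fst (gl2 (b,i))), snd (gl2 (b,i))) \<and> (\<forall>k<4. sg (p b, i) k = sg2 (b,i) k)"
      using bc2 b i unfolding branched_cover_def by blast
    have "fst (gl2 (b,i)) \<in> T2" using igD[OF ig2 b(1) i] by simp
    then show "gl (p' m, i) = (p' (fst (gl' (m, i))), snd (gl' (m, i)))"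
      using B b by (simp add: p'_def gl'_f gf)
    show "sg (p' m, i) k = sg' (m, i) k" if "k < 4" for k using B b that by (simp add: p'_def sg'_f gf)
  qed
  have ix': "\<forall>x\<in>tet_edges T'. 6 \<le> edge_index T' gl' sg' x"
  proof
    fix x assume x: "x \<in> tet_edges T'"
    obtain m E where xe: "x = (m,E)" and m: "m \<in> T'" and E: "E \<subseteq> {..<4}" "card E = 2"
      using x unfolding tet_edges_def by auto
    obtain b where b: "b \<in> T2" "m = f b" using m unfolding T'_def by auto
    define H :: "'b \<times> nat set \<Rightarrow> nat \<times> nat set" where "H = (\<lambda>(c,E). (f c, E))"
    have mH: "(H u, H v) \<in> edge_rel T' gl' sg'" if "(u,v) \<in> edge_rel T2 gl2 sg2" for u v
    proof -
      from that obtain c F i where uv: "u = (c,F)" "v = (fst (gl2 (c,i)), sg2 (c,i) ` F)"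
        "(c,F) \<in> tet_edges T2" "i < 4" "i \<notin> F"
        unfolding edge_rel_def by blast
      have c: "c \<in> T2" using uv(3) unfolding tet_edges_def by auto
      have "(f c, F) \<in> tet_edges T'" using uv(3) unfolding tet_edges_def T'_def by auto
      moreover have "H v = (fst (gl' (f c, i)), sg' (f c, i) ` F)" using c by (simp add: uv H_def gl'_f sg'_f)
      moreover have "H u = (f c, F)" by (simp add: uv H_def)
      ultimately show ?thesis unfolding edge_rel_def using uv by blast
    qed
    let ?A = "(edge_rel T2 gl2 sg2)\<^sup>* `` {(b,E)}"
    let ?B = "(edge_rel T' gl' sg')\<^sup>* `` {x}"
    have bE: "(b,E) \<in> tet_edges T2" using b E unfolding tet_edges_def by auto
    have A6: "6 \<le> card ?A" using ix2 bE unfolding edge_index_def by blast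
    have Asub: "?A \<subseteq> tet_edges T2" using edge_rel_closed[OF ig2 _ bE] by auto
    have injH: "inj_on H ?A"
    proof (rule inj_onI)
      fix u v assume u: "u \<in> ?A" and v: "v \<in> ?A" and e: "H u = H v"
      obtain c1 F1 where u1: "u = (c1,F1)" by force
      obtain c2 F2 where v1: "v = (c2,F2)" by force
      have "c1 \<in> T2" "c2 \<in> T2" using u v Asub u1 v1 unfolding tet_edges_def by auto
      then show "u = v" using e inj u1 v1 by (auto simp: H_def dest: inj_onD)
    qed
    have HB: "H ` ?A \<subseteq> ?B"
    proof
      fix z assume "z \<in> H ` ?A"
      then obtain u where u: "u \<in> ?A" "z = H u" by auto
      have "(H (b,E), H u) \<in> (edge_rel T' gl' sg')\<^sup>*"
        using u(1) by (intro rtrancl_map_gen[of _ _ _ H] mH) auto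
      moreover have "H (b,E) = x" using b xe by (simp add: H_def)
      ultimately show "z \<in> ?B" using u by auto
    qed
    have finB: "finite ?B"
    proof (rule finite_subset)
      show "?B \<subseteq> tet_edges T'" using edge_rel_closed[OF ig' _ x] by auto
      show "finite (tet_edges T')" using ig' by (intro finite_tet_edges) (simp add: ideal_gluing_def)
    qed
    have "card (H ` ?A) = card ?A" using injH by (rule card_image)
    then show "6 \<le> edge_index T' gl' sg' x" unfolding edge_index_def
      using card_mono[OF finB HB] A6 by simp
  qed
  show ?thesis
    using ig' ve' or' bc' ix' unfolding triangulated_ideal_3mfd_def by blast
qed

theorem proposition3p9:
  fixes T :: "'a set" and gl :: "'a \<times> nat \<Rightarrow> 'a \<times> nat" and sg :: "'a \<times> nat \<Rightarrow> nat \<Rightarrow> nat"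
  assumes "triangulated_ideal_3mfd T gl sg"
  shows "\<exists>(T' :: nat set) gl' sg' p.
           triangulated_ideal_3mfd T' gl' sg' \<and>
           branched_cover T' gl' sg' T gl sg p \<and>
           (\<forall>x\<in>tet_edges T'. edge_index T' gl' sg' x \<ge> 6)"
proof -
  have ig: "ideal_gluing T gl sg" and ve: "valid_edges T gl sg" and ori: "orientable_gluing T gl sg"
    using assms unfolding triangulated_ideal_3mfd_def by auto
  show ?thesis
    by (rule transfer_nat[OF cover_ig[OF ig] cover_valid[OF ig ve] cover_orient[OF ori] cover_bc[OF ig]])
       (use index_ge6[OF ig] in blast)
qed
end
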